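(* Let $\tau_1>0$ and let $\pi^u_{ij}$ be the marginal density of $\sigma_{ij}$ when $\sigma_{ij}\mid\rho_{ij}\sim N\big(0,\frac{\rho_{ij}}{1-\rho_{ij}}\tau_1^2\big)$ and $\rho_{ij}\sim\mathrm{Beta}(a,b)$, i.e. $\pi^u_{ij}(x)=\int_0^1 N\big(x\mid0,\frac{\rho}{1-\rho}\tau_1^2\big)\,\mathrm{Beta}(\rho\mid a,b)\,d\rho$. If $a=b=1/2$ and $\tau_1^2\asymp1/(np^4\tau^2)$, then for all sufficiently large $n$, $$\pi^u_{ij}(x)\ge\sqrt{\frac{1}{2\pi^3}}\,\frac{\tau_1}{x^2}\qquad\text{for all }x>1.$$
   Context: Here $n$ is the sample size, $p=p_n\to\infty$, $\tau\ge 1$, and $\tau_1=\tau_{1,n}$ depends on $n$; $a_n\asymp b_n$ means $a_n/b_n$ is bounded above and away from zero. *)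

theory Defs
  imports "HOL-Probability.Probability" "HOL-Library.Landau_Symbols"
begin

definition beta_density :: "real \<Rightarrow> real \<Rightarrow> real \<Rightarrow> real" where
  "beta_density a b r = r powr (a - 1) * (1 - r) powr (b - 1) / Beta a b"

text \<open>Marginal density of sigma when sigma | rho ~ N(0, rho/(1-rho) * t^2), rho ~ Beta(a,b).
  normal_density takes the standard deviation as second argument.\<close>
definition marginal_density :: "real \<Rightarrow> real \<Rightarrow> real \<Rightarrow> real \<Rightarrow> real" where
  "marginal_density a b t x =
     (LBINT r=0..1. normal_density 0 (sqrt (r / (1 - r) * t\<^sup>2)) x * beta_density a b r)"

end

theory Submission
  imports Defs
begin

lemma Beta_half: "Beta (1/2) (1/2) = (pi::real)"
  by (simp add: Beta_def Gamma_one_half_real)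

lemma feq:
  fixes t x r :: real
  assumes t: "t > 0" and r: "0 < r" "r < 1"
  shows "normal_density 0 (sqrt (r / (1 - r) * t\<^sup>2)) x * beta_density (1/2) (1/2) r
     = sqrt (1 / (2 * pi ^ 3)) / t * (1 / r) * exp (- (x\<^sup>2 / (2 * t\<^sup>2)) * (1 - r) / r)"
proof -
  have s2: "(sqrt (r / (1 - r) * t\<^sup>2))\<^sup>2 = r / (1 - r) * t\<^sup>2" using r by simp
  have p1: "r powr (1/2 - 1) = 1 / sqrt r" using r
    by (simp add: powr_minus_divide powr_half_sqrt[symmetric] powr_minus)
  have p2: "(1 - r) powr (1/2 - 1) = 1 / sqrt (1 - r)" using r
    by (simp add: powr_minus_divide powr_half_sqrt[symmetric] powr_minus)
  have e: "- (x - 0)\<^sup>2 / (2 * (r / (1 - r) * t\<^sup>2)) = - (x\<^sup>2 / (2 * t\<^sup>2)) * (1 - r) / r"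
    using r t by (simp add: field_simps)
  have sq: "sqrt (2 * pi * (r / (1 - r) * t\<^sup>2)) * sqrt r * sqrt (1 - r) = sqrt (2*pi) * t * r"
  proof -
    have "sqrt (2 * pi * (r / (1 - r) * t\<^sup>2)) * sqrt r * sqrt (1 - r)
        = sqrt (2 * pi * (r / (1 - r) * t\<^sup>2) * r * (1 - r))" by (metis real_sqrt_mult)
    also have "2 * pi * (r / (1 - r) * t\<^sup>2) * r * (1 - r) = (2*pi) * (t * r)\<^sup>2"
      using r by (simp add: field_simps power2_eq_square)
    also have "sqrt \<dots> = sqrt (2*pi) * (t * r)" using t r by (simp add: real_sqrt_mult)
    finally show ?thesis by simp
  qed
  have K: "sqrt (1 / (2 * pi ^ 3)) = 1 / (pi * sqrt (2 * pi))"
  proof -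
    have "1 / (2 * pi ^ 3) = (1 / (pi * sqrt (2 * pi)))\<^sup>2"
      by (simp add: power2_eq_square field_simps) (simp add: power3_eq_cube)
    then show ?thesis by simp
  qed
  show ?thesis
    unfolding normal_density_def beta_density_def s2 p1 p2 Beta_half e K
    using sq r t
    by (simp add: field_simps)
qed

lemma ei01: "einterval 0 1 = {0<..<(1::real)}"
  using einterval_eq_Icc[of 0 1] by (simp add: zero_ereal_def one_ereal_def)

lemma ei1: "einterval (ereal a) 1 = {a<..<(1::real)}"
  using einterval_eq_Icc[of a 1] by (simp add: one_ereal_def)

lemma core:
  fixes t x :: real
  assumes t: "t > 0" "t\<^sup>2 \<le> 1/12" and x: "x > 1"
  shows "marginal_density (1/2) (1/2) t x \<ge> sqrt (1 / (2 * pi ^ 3)) * t / x\<^sup>2"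
proof -
  define K where "K = sqrt (1 / (2 * pi ^ 3))"
  define c where "c = x\<^sup>2 / (2 * t\<^sup>2)"
  define f where "f = (\<lambda>r. normal_density 0 (sqrt (r / (1 - r) * t\<^sup>2)) x * beta_density (1/2) (1/2) r)"
  define g where "g = (\<lambda>r. K / t * exp (- (4/3 * c) * (1 - r)))"
  have Kpos: "K > 0" unfolding K_def by simp
  have x2: "x\<^sup>2 > 1" using x by (simp add: one_less_power)
  have c6: "c \<ge> 6"
  proof -
    have "1 / (2 * t\<^sup>2) \<ge> 6" using t by (simp add: field_simps)
    moreover have "c \<ge> 1 / (2 * t\<^sup>2)" unfolding c_def using x2 t
      by (intro divide_right_mono) auto
    ultimately show ?thesis by linarith
  qed
  have fe: "f r = K / t * (1 / r) * exp (- c * (1 - r) / r)" if "0 < r" "r < 1" for r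
    using feq[OF t(1) that, of x] unfolding f_def K_def c_def by simp
  have fnn: "f r \<ge> 0" if "0 < r" "r < 1" for r
    using fe[OF that] Kpos t that by simp
  have fle: "f r \<le> K / t" if r: "0 < r" "r < 1" for r
  proof -
    define y where "y = c * (1 - r) / r"
    have y0: "y \<ge> 0" unfolding y_def using c6 r by simp
    have "exp y \<ge> 1 + y" by (rule exp_ge_add_one_self)
    hence ey: "exp (- y) \<le> 1 / (1 + y)" using y0 by (simp add: exp_minus field_simps)
    have "(1 / r) * exp (- y) \<le> (1 / r) * (1 / (1 + y))"
      using ey r by (intro mult_left_mono) auto
    also have "\<dots> = 1 / (r + c * (1 - r))" unfolding y_def using r by (simp add: field_simps)
    also have "\<dots> \<le> 1"
    proof -
      have "c * (1 - r) \<ge> (1 - r)" using c6 r mult_right_mono[of 1 c "1 - r"] by simp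
      hence "r + c * (1 - r) \<ge> 1" by linarith
      thus ?thesis by simp
    qed
    finally have "(1 / r) * exp (- c * (1 - r) / r) \<le> 1" unfolding y_def by simp
    hence "K / t * ((1 / r) * exp (- c * (1 - r) / r)) \<le> K / t * 1"
      using Kpos t by (intro mult_left_mono) auto
    thus ?thesis using fe[OF r] by simp
  qed
  have fmeas[measurable]: "f \<in> borel_measurable borel"
    unfolding f_def normal_density_def beta_density_def by measurable
  have fint: "set_integrable lborel {0<..<1} f"
    unfolding set_integrable_def
    by (rule integrableI_bounded_set_indicator[where B = "K / t"]) (auto simp: fle fnn)
  have fint1: "set_integrable lborel {0<..3/4} f"
    by (rule set_integrable_subset[OF fint]) auto
  have fint2: "set_integrable lborel {3/4<..<1} f"
    by (rule set_integrable_subset[OF fint]) auto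
  have gcont: "continuous_on A g" for A unfolding g_def by (intro continuous_intros)
  have gint: "set_integrable lborel {3/4<..<1} g"
  proof -
    have "set_integrable lborel {3/4..1} g"
      by (rule borel_integrable_atLeastAtMost') (rule gcont)
    thus ?thesis by (rule set_integrable_subset) auto
  qed
  have "marginal_density (1/2) (1/2) t x = (LINT r:{0<..<1}|lborel. f r)"
    unfolding marginal_density_def f_def interval_lebesgue_integral_def
    by (simp add: ei01)
  also have "\<dots> = (LINT r:{0<..3/4}|lborel. f r) + (LINT r:{3/4<..<1}|lborel. f r)"
  proof -
    have "{0<..<(1::real)} = {0<..3/4} \<union> {3/4<..<1}" by auto
    moreover have "{0<..3/4} \<inter> {3/4<..<1} = ({}::real set)" by auto
    ultimately show ?thesis using set_integral_Un[OF _ fint1 fint2] by simp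
  qed
  also have "\<dots> \<ge> (LINT r:{3/4<..<1}|lborel. f r)"
  proof -
    have "(LINT r:{0<..3/4}|lborel. f r) \<ge> 0"
      unfolding set_lebesgue_integral_def
      by (rule Bochner_Integration.integral_nonneg) (auto simp: indicator_def intro: fnn)
    thus ?thesis by linarith
  qed
  moreover have "(LINT r:{3/4<..<1}|lborel. f r) \<ge> (LINT r:{3/4<..<1}|lborel. g r)"
  proof (rule set_integral_mono[OF gint fint2])
    fix r :: real assume r: "r \<in> {3/4<..<1}"
    have "exp (- (4/3 * c) * (1 - r)) \<le> exp (- c * (1 - r) / r)"
    proof -
      have ir: "1 / r \<le> 4/3" using r by (simp add: field_simps)
      have "c * (1 - r) * (1 / r) \<le> c * (1 - r) * (4/3)"
        using r c6 ir by (intro mult_left_mono) auto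
      hence "c * (1 - r) / r \<le> (4/3 * c) * (1 - r)" by simp
      thus ?thesis by simp
    qed
    also have "\<dots> \<le> (1 / r) * exp (- c * (1 - r) / r)"
      using r by (simp add: field_simps)
    finally have "K / t * exp (- (4/3 * c) * (1 - r)) \<le> K / t * ((1 / r) * exp (- c * (1 - r) / r))"
      using Kpos t by (intro mult_left_mono) auto
    thus "g r \<le> f r" using fe[of r] r unfolding g_def by simp
  qed
  moreover have "(LINT r:{3/4<..<1}|lborel. g r) = K / t * (1 - exp (- c / 3)) * 3 / (4 * c)"
  proof -
    define G where "G = (\<lambda>r. K / t * exp (- (4/3 * c) * (1 - r)) / (4/3 * c))"
    have "(LBINT r=ereal (3/4)..ereal 1. g r) = G 1 - G (3/4)"
    proof (rule interval_integral_FTC_finite)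
      show "continuous_on {min (3/4) 1..max (3/4) 1} g" by (rule gcont)
      fix r :: real
      show "(G has_vector_derivative g r) (at r within {min (3/4) 1..max (3/4) 1})"
        unfolding G_def g_def has_real_derivative_iff_has_vector_derivative[symmetric] using c6 t
        by (auto intro!: derivative_eq_intros simp: field_simps)
    qed
    moreover have "(LBINT r=ereal (3/4)..ereal 1. g r) = (LINT r:{3/4<..<1}|lborel. g r)"
      unfolding interval_lebesgue_integral_def
      by simp
    moreover have "G 1 - G (3/4) = K / t * (1 - exp (- c / 3)) * 3 / (4 * c)"
      unfolding G_def using c6 t by (simp add: field_simps)
    ultimately show ?thesis by simp
  qed
  moreover have "K / t * (1 - exp (- c / 3)) * 3 / (4 * c) \<ge> K * t / x\<^sup>2"
  proof -
    have "exp (c / 3) \<ge> 1 + c / 3" by (rule exp_ge_add_one_self)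
    hence "exp (c/3) \<ge> 3" using c6 by linarith
    hence "exp (- c / 3) \<le> 1 / 3" by (simp add: exp_minus field_simps)
    hence a: "(1 - exp (- c / 3)) \<ge> 2/3" by linarith
    have "K / t * (1 - exp (- c / 3)) * 3 / (4 * c) \<ge> K / t * (2/3) * 3 / (4 * c)"
      using a Kpos t c6 by (intro divide_right_mono mult_right_mono mult_left_mono) auto
    moreover have "K / t * (2/3) * 3 / (4 * c) = K * t / x\<^sup>2"
      unfolding c_def using t x by (simp add: field_simps power2_eq_square)
    ultimately show ?thesis by simp
  qed
  ultimately show ?thesis unfolding K_def by simp
qed

theorem lemma4:
  fixes \<tau>1 :: "nat \<Rightarrow> real" and p :: "nat \<Rightarrow> nat" and \<tau> :: real
  assumes "\<tau> \<ge> 1"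
    and "filterlim p at_top sequentially"
    and "\<forall>n. \<tau>1 n > 0"
    and "(\<lambda>n. (\<tau>1 n)\<^sup>2) \<in> \<Theta>(\<lambda>n. 1 / (real n * real (p n) ^ 4 * \<tau>\<^sup>2))"
  shows "\<forall>\<^sub>F n in sequentially. \<forall>x::real. x > 1 \<longrightarrow>
           marginal_density (1/2) (1/2) (\<tau>1 n) x \<ge> sqrt (1 / (2 * pi ^ 3)) * \<tau>1 n / x\<^sup>2"
proof -
  have "(\<lambda>n. (\<tau>1 n)\<^sup>2) \<in> O(\<lambda>n. 1 / (real n * real (p n) ^ 4 * \<tau>\<^sup>2))"
    using assms(4) by blast
  then obtain C where C: "C > 0"
    "eventually (\<lambda>n. norm ((\<tau>1 n)\<^sup>2) \<le> C * norm (1 / (real n * real (p n) ^ 4 * \<tau>\<^sup>2))) sequentially"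
    by (rule landau_o.bigE)
  have ev1: "eventually (\<lambda>n. p n \<ge> 1) sequentially"
    using assms(2) by (simp add: filterlim_at_top)
  have ev2: "eventually (\<lambda>n. real n \<ge> 12 * C + 1) sequentially"
    using filterlim_real_sequentially by (simp add: filterlim_at_top)
  have "eventually (\<lambda>n. (\<tau>1 n)\<^sup>2 \<le> 1/12) sequentially"
    using C(2) ev1 ev2
  proof eventually_elim
    case (elim n)
    have n1: "real n \<ge> 1" using elim(3) C(1) by linarith
    have p1: "real (p n) ^ 4 \<ge> 1" using elim(2) by simp
    have t1: "\<tau>\<^sup>2 \<ge> 1" using assms(1) by (simp add: one_le_power)
    have "real n * real (p n) ^ 4 * \<tau>\<^sup>2 \<ge> real n * 1 * 1"
      using n1 p1 t1 by (intro mult_mono) auto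
    hence D: "real n * real (p n) ^ 4 * \<tau>\<^sup>2 \<ge> real n" by simp
    have Dp: "real n * real (p n) ^ 4 * \<tau>\<^sup>2 > 0" using D n1 by linarith
    have "norm (1 / (real n * real (p n) ^ 4 * \<tau>\<^sup>2)) = 1 / (real n * real (p n) ^ 4 * \<tau>\<^sup>2)"
      using D n1 by simp
    also have "\<dots> \<le> 1 / real n" using D n1 Dp by (intro divide_left_mono) auto
    finally have "(\<tau>1 n)\<^sup>2 \<le> C * (1 / real n)"
      using elim(1) C(1) by (smt (verit) mult_left_mono real_norm_def zero_le_power2)
    also have "\<dots> \<le> 1/12" using elim(3) C(1) n1 by (simp add: field_simps)
    finally show ?case .
  qed
  thus ?thesis
    by eventually_elim (use assms(3) core in auto)
qed

end
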